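(* Let $m,n\in\mathbb N$ with $m\ge 5$, $n\ge 8$, $n>m$, and let $j\in\{1,2\}$. Then $r(K_{1,m-1},T_n^j)\in\{m+n-4,\ m+n-5\}$. Moreover, if $mn$ is even, then $r(K_{1,m-1},T_n^j)=m+n-4$.
   Context: All graphs are finite and simple; a graph "contains" $H$ if it has a subgraph isomorphic to $H$. $K_{1,m-1}$ is the star on $m$ vertices. For graphs $G_1,G_2$, the Ramsey number $r(G_1,G_2)$ is the smallest positive integer $N$ such that for every graph $G$ on $N$ vertices, either $G$ contains a copy of $G_1$ or the complement $\overline G$ contains a copy of $G_2$. For $n\ge 5$, $T_n^1$ is the tree with vertex set $\{v_0,\ldots,v_{n-1}\}$ and edges $v_0v_1,\ldots,v_0v_{n-3},v_{n-4}v_{n-2},v_{n-3}v_{n-1}$, and $T_n^2$ is the tree on the same vertex set with edges $v_0v_1,\ldots,v_0v_{n-3},v_{n-3}v_{n-2},v_{n-3}v_{n-1}$. *)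

theory Defs
  imports Main
begin

definition simple_graph :: "'a set \<Rightarrow> ('a \<Rightarrow> 'a \<Rightarrow> bool) \<Rightarrow> bool" where
  "simple_graph V E \<longleftrightarrow> finite V \<and>
     (\<forall>u\<in>V. \<forall>v\<in>V. E u v \<longrightarrow> E v u) \<and> (\<forall>v\<in>V. \<not> E v v)"

definition compl_graph :: "('a \<Rightarrow> 'a \<Rightarrow> bool) \<Rightarrow> 'a \<Rightarrow> 'a \<Rightarrow> bool" where
  "compl_graph E u v \<longleftrightarrow> u \<noteq> v \<and> \<not> E u v"

definition contains :: "'a set \<Rightarrow> ('a \<Rightarrow> 'a \<Rightarrow> bool) \<Rightarrow> 'b set \<Rightarrow> ('b \<Rightarrow> 'b \<Rightarrow> bool) \<Rightarrow> bool" where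
  "contains V E VH EH \<longleftrightarrow> (\<exists>f. inj_on f VH \<and> f ` VH \<subseteq> V \<and>
      (\<forall>u\<in>VH. \<forall>v\<in>VH. EH u v \<longrightarrow> E (f u) (f v)))"

definition ramsey_number :: "'a set \<Rightarrow> ('a \<Rightarrow> 'a \<Rightarrow> bool) \<Rightarrow> 'b set \<Rightarrow> ('b \<Rightarrow> 'b \<Rightarrow> bool) \<Rightarrow> nat" where
  "ramsey_number V1 E1 V2 E2 = (LEAST N. 0 < N \<and>
      (\<forall>E :: nat \<Rightarrow> nat \<Rightarrow> bool. simple_graph {0..<N} E \<longrightarrow>
         contains {0..<N} E V1 E1 \<or> contains {0..<N} (compl_graph E) V2 E2))"

definition edges_of :: "(nat \<times> nat) set \<Rightarrow> nat \<Rightarrow> nat \<Rightarrow> bool" where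
  "edges_of S u v \<longleftrightarrow> (u, v) \<in> S \<or> (v, u) \<in> S"

definition star_edges :: "nat \<Rightarrow> nat \<Rightarrow> nat \<Rightarrow> bool" where
  "star_edges m = edges_of {(0, i) | i. 1 \<le> i \<and> i \<le> m - 1}"

definition T1_edges :: "nat \<Rightarrow> nat \<Rightarrow> nat \<Rightarrow> bool" where
  "T1_edges n = edges_of ({(0, i) | i. 1 \<le> i \<and> i \<le> n - 3} \<union>
      {(n - 4, n - 2), (n - 3, n - 1)})"

definition T2_edges :: "nat \<Rightarrow> nat \<Rightarrow> nat \<Rightarrow> bool" where
  "T2_edges n = edges_of ({(0, i) | i. 1 \<le> i \<and> i \<le> n - 3} \<union>
      {(n - 3, n - 2), (n - 3, n - 1)})"

definition T_edges :: "nat \<Rightarrow> nat \<Rightarrow> nat \<Rightarrow> nat \<Rightarrow> bool" where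
  "T_edges j n = (if j = 1 then T1_edges n else T2_edges n)"

end

theory Submission
  imports Defs
begin


lemma embed_T2:
  fixes adj :: "nat \<Rightarrow> nat \<Rightarrow> bool"
  assumes sym: "\<And>a b. adj a b \<Longrightarrow> adj b a"
    and V: "\<And>a b. adj a b \<Longrightarrow> a \<in> V"
    and n: "n \<ge> 5"
    and e: "adj u w" "adj w y1" "adj w y2"
    and d: "distinct [u, w, y1, y2]"
    and L: "L \<subseteq> {v. adj u v}" "card L = n - 4" "finite L" "w \<notin> L" "y1 \<notin> L" "y2 \<notin> L" "u \<notin> L"
  shows "contains V adj {0..<n} (T2_edges n)"
proof -
  obtain g where g: "bij_betw g {1..n-4} L" using ex_bij_betw_nat_finite_1[OF L(3)] L(2) by auto
  define f where "f i = (if i = 0 then u else if i \<le> n - 4 then g i else if i = n - 3 then w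
      else if i = n - 2 then y1 else y2)" for i
  have gL: "i \<in> {1..n-4} \<Longrightarrow> g i \<in> L" for i using g by (auto simp: bij_betw_def)
  have ginj: "inj_on g {1..n-4}" using g by (auto simp: bij_betw_def)
  have adjL: "x \<in> L \<Longrightarrow> adj u x" for x using L(1) by auto
  have f0: "f 0 = u" by (simp add: f_def)
  have a1: "\<not> n-3 \<le> n-4" "n-3 \<noteq> 0" "\<not> n-2 \<le> n-4" "n-2 \<noteq> 0" "n-2 \<noteq> n-3"
     "\<not> n-1 \<le> n-4" "n-1 \<noteq> 0" "n-1 \<noteq> n-2" "n-1 \<noteq> n-3" using n by arith+
  have f3: "f (n-3) = w" using a1 unfolding f_def by presburger
  have f2: "f (n-2) = y1" using a1 unfolding f_def by presburger
  have f1: "f (n-1) = y2" using a1 unfolding f_def by presburger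
  have fL: "1 \<le> i \<Longrightarrow> i \<le> n - 4 \<Longrightarrow> f i = g i" for i by (simp add: f_def)
  have cls: "i < n \<Longrightarrow> i = 0 \<or> (1 \<le> i \<and> i \<le> n - 4) \<or> i = n-3 \<or> i = n-2 \<or> i = n-1" for i
    using n by linarith
  have inj: "inj_on f {0..<n}"
  proof (rule inj_onI)
    fix i k assume i: "i \<in> {0..<n}" and k: "k \<in> {0..<n}" and fe: "f i = f k"
    have di: "distinct [u, w, y1, y2]" by (rule d)
    have "i = 0 \<or> (1 \<le> i \<and> i \<le> n - 4) \<or> i = n-3 \<or> i = n-2 \<or> i = n-1" using cls i by auto
    moreover have "k = 0 \<or> (1 \<le> k \<and> k \<le> n - 4) \<or> k = n-3 \<or> k = n-2 \<or> k = n-1" using cls k by auto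
    moreover have "g a \<in> L" if "1 \<le> a" "a \<le> n - 4" for a using gL that by auto
    moreover have "g a = g b \<Longrightarrow> 1 \<le> a \<Longrightarrow> a \<le> n - 4 \<Longrightarrow> 1 \<le> b \<Longrightarrow> b \<le> n - 4 \<Longrightarrow> a = b" for a b
      using ginj by (auto simp: inj_on_def)
    ultimately show "i = k" using fe f0 f1 f2 f3 fL di L(4-7) n
      by (smt (verit) distinct.simps(2) list.set_intros(1) list.set_intros(2))
  qed
  have fadj: "adj (f a) (f b)" if "T2_edges n a b" "a < n" "b < n" for a b
  proof -
    have "(a, b) \<in> {(0, i) | i. 1 \<le> i \<and> i \<le> n - 3} \<union> {(n - 3, n - 2), (n - 3, n - 1)} \<or>
          (b, a) \<in> {(0, i) | i. 1 \<le> i \<and> i \<le> n - 3} \<union> {(n - 3, n - 2), (n - 3, n - 1)}"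
      using that(1) by (simp add: T2_edges_def edges_of_def)
    moreover have "adj (f x) (f y)" if "(x, y) \<in> {(0, i) | i. 1 \<le> i \<and> i \<le> n - 3} \<union> {(n - 3, n - 2), (n - 3, n - 1)}" for x y
    proof -
      have "(x = 0 \<and> 1 \<le> y \<and> y \<le> n - 3) \<or> (x, y) \<in> {(n - 3, n - 2), (n - 3, n - 1)}" using that by auto
      moreover have "adj (f 0) (f y)" if "1 \<le> y" "y \<le> n - 3" for y
      proof (cases "y \<le> n - 4")
        case True thus ?thesis using that fL gL adjL f0 by auto
      next
        case False hence "y = n - 3" using that by arith
        thus ?thesis using f0 f3 e by simp
      qed
      ultimately show ?thesis using f1 f2 f3 e by auto
    qed
    ultimately show ?thesis using sym by blast
  qed
  have img: "f ` {0..<n} \<subseteq> V"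
  proof
    fix x assume "x \<in> f ` {0..<n}"
    then obtain i where "i < n" "x = f i" by auto
    moreover have "T2_edges n i 0 \<or> T2_edges n i (n - 3)" using \<open>i < n\<close> n
      by (auto simp: T2_edges_def edges_of_def)
    ultimately show "x \<in> V" using fadj V n by force
  qed
  show ?thesis unfolding contains_def using inj img fadj by auto
qed

lemma embed_T1:
  fixes adj :: "nat \<Rightarrow> nat \<Rightarrow> bool"
  assumes sym: "\<And>a b. adj a b \<Longrightarrow> adj b a"
    and V: "\<And>a b. adj a b \<Longrightarrow> a \<in> V"
    and n: "n \<ge> 6"
    and e: "adj u w1" "adj u w2" "adj w1 y1" "adj w2 y2"
    and d: "distinct [u, w1, w2, y1, y2]"
    and L: "L \<subseteq> {v. adj u v}" "card L = n - 5" "finite L" "w1 \<notin> L" "w2 \<notin> L" "y1 \<notin> L" "y2 \<notin> L" "u \<notin> L"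
  shows "contains V adj {0..<n} (T1_edges n)"
proof -
  obtain g where g: "bij_betw g {1..n-5} L" using ex_bij_betw_nat_finite_1[OF L(3)] L(2) by auto
  define f where "f i = (if i = 0 then u else if i \<le> n - 5 then g i else if i = n - 4 then w1 else if i = n - 3 then w2
      else if i = n - 2 then y1 else y2)" for i
  have gL: "i \<in> {1..n-5} \<Longrightarrow> g i \<in> L" for i using g by (auto simp: bij_betw_def)
  have ginj: "inj_on g {1..n-5}" using g by (auto simp: bij_betw_def)
  have adjL: "x \<in> L \<Longrightarrow> adj u x" for x using L(1) by auto
  have f0: "f 0 = u" by (simp add: f_def)
  have a1: "\<not> n-3 \<le> n-5" "n-3 \<noteq> 0" "\<not> n-2 \<le> n-5" "n-2 \<noteq> 0" "n-2 \<noteq> n-3"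
     "\<not> n-1 \<le> n-5" "n-1 \<noteq> 0" "n-1 \<noteq> n-2" "n-1 \<noteq> n-3"
     "\<not> n-4 \<le> n-5" "n-4 \<noteq> 0" "n-3 \<noteq> n-4" "n-2 \<noteq> n-4" "n-1 \<noteq> n-4" using n by arith+
  have f4: "f (n-4) = w1" using a1 unfolding f_def by presburger
  have f3: "f (n-3) = w2" using a1 unfolding f_def by presburger
  have f2: "f (n-2) = y1" using a1 unfolding f_def by presburger
  have f1: "f (n-1) = y2" using a1 unfolding f_def by presburger
  have fL: "1 \<le> i \<Longrightarrow> i \<le> n - 5 \<Longrightarrow> f i = g i" for i by (simp add: f_def)
  have cls: "i < n \<Longrightarrow> i = 0 \<or> (1 \<le> i \<and> i \<le> n - 5) \<or> i = n-4 \<or> i = n-3 \<or> i = n-2 \<or> i = n-1" for i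
    using n by linarith
  have inj: "inj_on f {0..<n}"
  proof (rule inj_onI)
    fix i k assume i: "i \<in> {0..<n}" and k: "k \<in> {0..<n}" and fe: "f i = f k"
    have di: "distinct [u, w1, w2, y1, y2]" by (rule d)
    have "i = 0 \<or> (1 \<le> i \<and> i \<le> n - 5) \<or> i = n-4 \<or> i = n-3 \<or> i = n-2 \<or> i = n-1" using cls i by auto
    moreover have "k = 0 \<or> (1 \<le> k \<and> k \<le> n - 5) \<or> k = n-4 \<or> k = n-3 \<or> k = n-2 \<or> k = n-1" using cls k by auto
    moreover have "g a \<in> L" if "1 \<le> a" "a \<le> n - 5" for a using gL that by auto
    moreover have "g a = g b \<Longrightarrow> 1 \<le> a \<Longrightarrow> a \<le> n - 5 \<Longrightarrow> 1 \<le> b \<Longrightarrow> b \<le> n - 5 \<Longrightarrow> a = b" for a b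
      using ginj by (auto simp: inj_on_def)
    ultimately show "i = k" using fe f0 f1 f2 f3 f4 fL di L(4-8) a1
      by (smt (verit) distinct.simps(2) list.set_intros(1) list.set_intros(2))
  qed
  have fadj: "adj (f a) (f b)" if "T1_edges n a b" "a < n" "b < n" for a b
  proof -
    have "(a, b) \<in> {(0, i) | i. 1 \<le> i \<and> i \<le> n - 3} \<union> {(n - 4, n - 2), (n - 3, n - 1)} \<or>
          (b, a) \<in> {(0, i) | i. 1 \<le> i \<and> i \<le> n - 3} \<union> {(n - 4, n - 2), (n - 3, n - 1)}"
      using that(1) by (simp add: T1_edges_def edges_of_def)
    moreover have "adj (f x) (f y)" if "(x, y) \<in> {(0, i) | i. 1 \<le> i \<and> i \<le> n - 3} \<union> {(n - 4, n - 2), (n - 3, n - 1)}" for x y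
    proof -
      have "(x = 0 \<and> 1 \<le> y \<and> y \<le> n - 3) \<or> (x, y) \<in> {(n - 4, n - 2), (n - 3, n - 1)}" using that by auto
      moreover have "adj (f 0) (f y)" if "1 \<le> y" "y \<le> n - 3" for y
      proof -
        have "y \<le> n - 5 \<or> y = n - 4 \<or> y = n - 3" using that by arith
        thus ?thesis using that fL gL adjL f0 f3 f4 e by auto
      qed
      ultimately show ?thesis using f1 f2 f3 f4 e by auto
    qed
    ultimately show ?thesis using sym by blast
  qed
  have img: "f ` {0..<n} \<subseteq> V"
  proof
    fix x assume "x \<in> f ` {0..<n}"
    then obtain i where "i < n" "x = f i" by auto
    moreover have "i = 0 \<or> (1 \<le> i \<and> i \<le> n - 5) \<or> i = n-4 \<or> i = n-3 \<or> i = n-2 \<or> i = n-1" using cls \<open>i < n\<close> by auto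
    moreover have "u \<in> V" "w1 \<in> V" "w2 \<in> V" "y1 \<in> V" "y2 \<in> V" using e V sym by blast+
    moreover have "g i \<in> V" if "1 \<le> i" "i \<le> n - 5" using that gL adjL V sym by (meson atLeastAtMost_iff)
    ultimately show "x \<in> V" using f0 f1 f2 f3 f4 fL by auto
  qed
  show ?thesis unfolding contains_def using inj img fadj by auto
qed



lemma pick: "finite B \<Longrightarrow> card B < card A \<Longrightarrow> \<exists>x\<in>A. x \<notin> B"
  by (metis card_mono not_le subsetI)

lemma card3: "card {a, b, c} \<le> 3"
  by (simp add: card_insert_if)

lemma card2: "card {a, b} \<le> 2"
  by (simp add: card_insert_if)

lemma T2_cfg:
  fixes adj :: "nat \<Rightarrow> nat \<Rightarrow> bool"
  assumes sym: "\<And>a b. adj a b \<Longrightarrow> adj b a"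
    and V: "\<And>a b. adj a b \<Longrightarrow> a \<in> V"
    and irr: "\<And>a. \<not> adj a a"
    and fin: "finite V" and cV: "card V = m + n - 4"
    and m5: "5 \<le> m" and mn: "m < n" and n8: "8 \<le> n"
    and deg: "\<And>u. u \<in> V \<Longrightarrow> n - 3 \<le> card {v. adj u v}"
  shows "contains V adj {0..<n} (T2_edges n)"
proof -
  define nb where "nb u = {v. adj u v}" for u
  have nbV: "nb u \<subseteq> V" for u using V sym by (auto simp: nb_def)
  have finnb: "finite (nb u)" for u using nbV fin finite_subset by blast
  have irr': "u \<notin> nb u" for u using irr by (simp add: nb_def)
  have nbs: "x \<in> nb y \<longleftrightarrow> y \<in> nb x" for x y using sym by (auto simp: nb_def)
  have degn: "u \<in> V \<Longrightarrow> n - 3 \<le> card (nb u)" for u using deg by (simp add: nb_def)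
  have Vne: "V \<noteq> {}" using cV m5 by auto
  define D where "D = Max ((\<lambda>v. card (nb v)) ` V)"
  have "D \<in> (\<lambda>v. card (nb v)) ` V" unfolding D_def using fin Vne by (intro Max_in) auto
  then obtain u where u: "u \<in> V" and Du: "D = card (nb u)" by auto
  have umax: "v \<in> V \<Longrightarrow> card (nb v) \<le> D" for v unfolding D_def using fin by (intro Max_ge) auto
  have D3: "n - 3 \<le> D" using degn u Du by auto
  show ?thesis
  proof (cases "n - 1 \<le> D")
    case True
    have "card {} < card (nb u)" using D3 Du n8 by simp
    then obtain w where w: "w \<in> nb u" using pick[of "{}" "nb u"] by auto
    have wV: "w \<in> V" using w nbV by auto
    have "card {u} < card (nb w)" using degn[OF wV] n8 by simp
    then obtain y1 where y1: "y1 \<in> nb w" "y1 \<notin> {u}" using pick[of "{u}" "nb w"] by auto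
    have "card {u, y1} < card (nb w)" using degn[OF wV] n8 card2[of u y1] by linarith
    then obtain y2 where y2: "y2 \<in> nb w" "y2 \<notin> {u, y1}" using pick[of "{u, y1}" "nb w"] by auto
    have "card (nb u) - card {w, y1, y2} \<le> card (nb u - {w, y1, y2})" by (rule diff_card_le_card_Diff) auto
    hence "n - 4 \<le> card (nb u - {w, y1, y2})" using card3[of w y1 y2] True Du by linarith
    then obtain L where L: "L \<subseteq> nb u - {w, y1, y2}" "card L = n - 4" "finite L" by (rule obtain_subset_with_card_n)
    show ?thesis
    proof (rule embed_T2[OF sym V _ _ _ _ _ L(1)[THEN subset_trans] L(2) L(3)])
      show "adj u w" "adj w y1" "adj w y2" using w y1 y2 by (auto simp: nb_def)
      show "distinct [u, w, y1, y2]" using w y1 y2 irr' by auto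
    qed (use n8 L irr' in \<open>auto simp: nb_def\<close>)
  next
    case False
    define R where "R = V - nb u - {u}"
    have cR: "card R + D + 1 = m + n - 4"
    proof -
      have e1: "R = V - insert u (nb u)" unfolding R_def by auto
      have sub: "insert u (nb u) \<subseteq> V" using nbV u by auto
      have c1: "card (insert u (nb u)) = D + 1" using irr' finnb Du by simp
      have c2: "card R = card V - card (insert u (nb u))" unfolding e1 using sub finnb by (simp add: card_Diff_subset)
      have c3: "card (insert u (nb u)) \<le> card V" using card_mono[OF fin sub] .
      show ?thesis using c1 c2 c3 cV by linarith
    qed
    have finR: "finite R" using fin R_def by auto
    have Tc: "n - 3 \<le> card (nb r \<inter> nb u) + (card R - 1)" if r: "r \<in> R" for r
    proof -
      have rV: "r \<in> V" using r R_def by auto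
      have "nb r \<subseteq> (nb r \<inter> nb u) \<union> (R - {r})"
      proof
        fix x assume x: "x \<in> nb r"
        have "x \<noteq> u" using x r sym R_def by (auto simp: nb_def)
        moreover have "x \<noteq> r" using x irr' by auto
        moreover have "x \<in> V" using x nbV by auto
        ultimately show "x \<in> (nb r \<inter> nb u) \<union> (R - {r})" using x R_def by auto
      qed
      hence "card (nb r) \<le> card ((nb r \<inter> nb u) \<union> (R - {r}))" using finR finnb by (intro card_mono) auto
      also have "\<dots> \<le> card (nb r \<inter> nb u) + card (R - {r})" by (rule card_Un_le)
      also have "card (R - {r}) = card R - 1" using r finR by auto
      finally show ?thesis using degn[OF rV] by linarith
    qed
    have R2: "2 \<le> card R" using cR False m5 by linarith
    have Tne: "\<exists>s. s \<in> nb r \<inter> nb u" if "r \<in> R" for r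
    proof -
      have "card R \<noteq> 0" using that finR by auto
      hence "1 \<le> card (nb r \<inter> nb u)" using Tc[OF that] cR D3 mn m5 by linarith
      hence "nb r \<inter> nb u \<noteq> {}" by (intro notI) simp
      thus ?thesis by blast
    qed
    show ?thesis
    proof (cases "\<exists>s y1 y2. s \<in> nb u \<and> y1 \<in> R \<and> y2 \<in> R \<and> y1 \<noteq> y2 \<and> adj s y1 \<and> adj s y2")
      case True
      then obtain s y1 y2 where s: "s \<in> nb u" "y1 \<in> R" "y2 \<in> R" "y1 \<noteq> y2" "adj s y1" "adj s y2" by blast
      have "card (nb u) - card {s} \<le> card (nb u - {s})" by (rule diff_card_le_card_Diff) auto
      hence "n - 4 \<le> card (nb u - {s})" using D3 Du by auto
      then obtain L where L: "L \<subseteq> nb u - {s}" "card L = n - 4" "finite L" by (rule obtain_subset_with_card_n)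
      show ?thesis
      proof (rule embed_T2[OF sym V _ _ _ _ _ L(1)[THEN subset_trans] L(2) L(3)])
        show "adj u s" "adj s y1" "adj s y2" using s by (auto simp: nb_def)
        show "distinct [u, s, y1, y2]" using s irr' R_def by auto
      qed (use n8 L irr' s R_def in \<open>auto simp: nb_def\<close>)
    next
      case False
      hence uniq: "\<And>s a b. s \<in> nb u \<Longrightarrow> a \<in> R \<Longrightarrow> b \<in> R \<Longrightarrow> adj s a \<Longrightarrow> adj s b \<Longrightarrow> a = b" by blast
      have "card {} < card R" "card {r1} < card R" for r1 using R2 by auto
      then obtain r1 r2 where r1: "r1 \<in> R" and r2: "r2 \<in> R" "r2 \<notin> {r1}" using pick[of "{}" R] pick[of "{_}" R] by (metis finite.emptyI finite_insert)
      have disj: "(nb r1 \<inter> nb u) \<inter> (nb r2 \<inter> nb u) = {}"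
      proof -
        { fix s assume s: "s \<in> nb r1" "s \<in> nb r2" "s \<in> nb u"
          have "adj s r1" "adj s r2" using s sym by (auto simp: nb_def)
          hence "r1 = r2" using uniq[OF s(3) r1 r2(1)] by blast
          hence False using r2 by auto }
        thus ?thesis by blast
      qed
      have "card (nb r1 \<inter> nb u) + card (nb r2 \<inter> nb u) = card ((nb r1 \<inter> nb u) \<union> (nb r2 \<inter> nb u))"
        using disj finnb by (intro card_Un_disjoint[symmetric]) auto
      also have "\<dots> \<le> D" unfolding Du by (rule card_mono[OF finnb]) auto
      finally have sum: "card (nb r1 \<inter> nb u) + card (nb r2 \<inter> nb u) \<le> D" .
      obtain r where r: "r \<in> R" and cT: "card (nb r \<inter> nb u) \<le> n - 5"
      proof (cases "card (nb r1 \<inter> nb u) \<le> n - 5")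
        case True thus ?thesis using that r1 by blast
      next
        case False2: False
        hence "card (nb r2 \<inter> nb u) \<le> n - 5" using sum \<open>\<not> n - 1 \<le> D\<close> n8 by linarith
        thus ?thesis using that r2 by blast
      qed
      have rV: "r \<in> V" using r R_def by auto
      obtain s where s: "s \<in> nb r \<inter> nb u" using Tne[OF r] by blast
      have sV: "s \<in> V" using s nbV by auto
      have inter: "nb s \<inter> (nb r \<union> {r}) \<subseteq> ((nb r \<inter> nb u) - {s}) \<union> {r}"
      proof
        fix x assume x: "x \<in> nb s \<inter> (nb r \<union> {r})"
        show "x \<in> ((nb r \<inter> nb u) - {s}) \<union> {r}"
        proof (cases "x = r")
          case False
          hence xr: "x \<in> nb r" "x \<in> nb s" using x by auto
          have "x \<noteq> u" using xr r sym R_def by (auto simp: nb_def)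
          moreover have "x \<noteq> s" using xr irr' by auto
          moreover have "x \<in> V" using xr nbV by auto
          moreover have "x \<notin> R"
          proof
            assume "x \<in> R"
            moreover have "adj s r" "adj s x" using s xr sym by (auto simp: nb_def)
            moreover have "s \<in> nb u" using s by auto
            ultimately have "x = r" using uniq[of s r x] r by blast
            thus False using xr irr' by auto
          qed
          ultimately show ?thesis using xr R_def by auto
        qed auto
      qed
      have "card (nb s \<inter> (nb r \<union> {r})) \<le> card (((nb r \<inter> nb u) - {s}) \<union> {r})"
        using inter finnb by (intro card_mono) auto
      also have "\<dots> \<le> card ((nb r \<inter> nb u) - {s}) + card {r}" by (rule card_Un_le)
      also have "\<dots> = card (nb r \<inter> nb u)"
      proof -
        have "0 < card (nb r \<inter> nb u)" using s finnb card_gt_0_iff by blast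
        thus ?thesis using s finnb by (simp add: card_Diff_singleton)
      qed
      finally have ci: "card (nb s \<inter> (nb r \<union> {r})) \<le> n - 5" using cT by linarith
      have "card (nb s - (nb r \<union> {r})) = card (nb s) - card (nb s \<inter> (nb r \<union> {r}))"
        using finnb by (intro card_Diff_subset_Int) auto
      hence cA: "2 \<le> card (nb s - (nb r \<union> {r}))" using ci degn[OF sV] n8 by linarith
      have "card {} < card (nb s - (nb r \<union> {r}))" "card {y} < card (nb s - (nb r \<union> {r}))" for y using cA by auto
      then obtain y1 y2 where y1: "y1 \<in> nb s - (nb r \<union> {r})" and y2: "y2 \<in> nb s - (nb r \<union> {r})" "y2 \<notin> {y1}"
        using pick[of "{}" "nb s - (nb r \<union> {r})"] pick[of "{_}" "nb s - (nb r \<union> {r})"] by (metis finite.emptyI finite_insert)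
      have "card (nb r) - card {s} \<le> card (nb r - {s})" by (rule diff_card_le_card_Diff) auto
      hence "n - 4 \<le> card (nb r - {s})" using degn[OF rV] by auto
      then obtain L where L: "L \<subseteq> nb r - {s}" "card L = n - 4" "finite L" by (rule obtain_subset_with_card_n)
      show ?thesis
      proof (rule embed_T2[OF sym V _ _ _ _ _ L(1)[THEN subset_trans] L(2) L(3)])
        show "adj r s" "adj s y1" "adj s y2" using s y1 y2 by (auto simp: nb_def)
        show "distinct [r, s, y1, y2]" using s y1 y2 irr' by auto
      qed (use n8 L irr' y1 y2 in \<open>auto simp: nb_def\<close>)
    qed
  qed
qed

lemma T1_cfg:
  fixes adj :: "nat \<Rightarrow> nat \<Rightarrow> bool"
  assumes sym: "\<And>a b. adj a b \<Longrightarrow> adj b a"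
    and V: "\<And>a b. adj a b \<Longrightarrow> a \<in> V"
    and irr: "\<And>a. \<not> adj a a"
    and fin: "finite V" and cV: "card V = m + n - 4"
    and m5: "5 \<le> m" and mn: "m < n" and n8: "8 \<le> n"
    and deg: "\<And>u. u \<in> V \<Longrightarrow> n - 3 \<le> card {v. adj u v}"
  shows "contains V adj {0..<n} (T1_edges n)"
proof -
  define nb where "nb u = {v. adj u v}" for u
  have nbV: "nb u \<subseteq> V" for u using V sym by (auto simp: nb_def)
  have finnb: "finite (nb u)" for u using nbV fin finite_subset by blast
  have irr': "u \<notin> nb u" for u using irr by (simp add: nb_def)
  have nbs: "x \<in> nb y \<longleftrightarrow> y \<in> nb x" for x y using sym by (auto simp: nb_def)
  have degn: "u \<in> V \<Longrightarrow> n - 3 \<le> card (nb u)" for u using deg by (simp add: nb_def)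
  have Vne: "V \<noteq> {}" using cV m5 by auto
  define D where "D = Max ((\<lambda>v. card (nb v)) ` V)"
  have "D \<in> (\<lambda>v. card (nb v)) ` V" unfolding D_def using fin Vne by (intro Max_in) auto
  then obtain u where u: "u \<in> V" and Du: "D = card (nb u)" by auto
  have umax: "v \<in> V \<Longrightarrow> card (nb v) \<le> D" for v unfolding D_def using fin by (intro Max_ge) auto
  have D3: "n - 3 \<le> D" using degn u Du by auto
  show ?thesis
  proof (cases "n - 1 \<le> D")
    case True
    have "card {} < card (nb u)" using D3 Du n8 by simp
    then obtain w1 where w1: "w1 \<in> nb u" using pick[of "{}" "nb u"] by auto
    have "card {w1} < card (nb u)" using D3 Du n8 by simp
    then obtain w2 where w2: "w2 \<in> nb u" "w2 \<notin> {w1}" using pick[of "{w1}" "nb u"] by auto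
    have w1V: "w1 \<in> V" and w2V: "w2 \<in> V" using w1 w2 nbV by auto
    have "card {u, w2} < card (nb w1)" using degn[OF w1V] n8 card2[of u w2] by linarith
    then obtain y1 where y1: "y1 \<in> nb w1" "y1 \<notin> {u, w2}" using pick[of "{u, w2}" "nb w1"] by auto
    have "card {u, w1, y1} < card (nb w2)" using degn[OF w2V] n8 card3[of u w1 y1] by linarith
    then obtain y2 where y2: "y2 \<in> nb w2" "y2 \<notin> {u, w1, y1}" using pick[of "{u, w1, y1}" "nb w2"] by auto
    have "card (nb u) - card {w1, w2, y1, y2} \<le> card (nb u - {w1, w2, y1, y2})" by (rule diff_card_le_card_Diff) auto
    moreover have "card {w1, w2, y1, y2} \<le> 4" by (simp add: card_insert_if)
    ultimately have "n - 5 \<le> card (nb u - {w1, w2, y1, y2})" using True Du by linarith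
    then obtain L where L: "L \<subseteq> nb u - {w1, w2, y1, y2}" "card L = n - 5" "finite L" by (rule obtain_subset_with_card_n)
    show ?thesis
    proof (rule embed_T1[OF sym V _ _ _ _ _ _ L(1)[THEN subset_trans] L(2) L(3)])
      show "adj u w1" "adj u w2" "adj w1 y1" "adj w2 y2" using w1 w2 y1 y2 by (auto simp: nb_def)
      show "distinct [u, w1, w2, y1, y2]" using w1 w2 y1 y2 irr' by auto
    qed (use n8 L irr' in \<open>auto simp: nb_def\<close>)
  next
    case False
    define R where "R = V - nb u - {u}"
    have cR: "card R + D + 1 = m + n - 4"
    proof -
      have e1: "R = V - insert u (nb u)" unfolding R_def by auto
      have sub: "insert u (nb u) \<subseteq> V" using nbV u by auto
      have c1: "card (insert u (nb u)) = D + 1" using irr' finnb Du by simp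
      have c2: "card R = card V - card (insert u (nb u))" unfolding e1 using sub finnb by (simp add: card_Diff_subset)
      have c3: "card (insert u (nb u)) \<le> card V" using card_mono[OF fin sub] .
      show ?thesis using c1 c2 c3 cV by linarith
    qed
    have finR: "finite R" using fin R_def by auto
    have Tc: "n - 3 \<le> card (nb r \<inter> nb u) + (card R - 1)" if r: "r \<in> R" for r
    proof -
      have rV: "r \<in> V" using r R_def by auto
      have "nb r \<subseteq> (nb r \<inter> nb u) \<union> (R - {r})"
      proof
        fix x assume x: "x \<in> nb r"
        have "x \<noteq> u" using x r sym R_def by (auto simp: nb_def)
        moreover have "x \<noteq> r" using x irr' by auto
        moreover have "x \<in> V" using x nbV by auto
        ultimately show "x \<in> (nb r \<inter> nb u) \<union> (R - {r})" using x R_def by auto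
      qed
      hence "card (nb r) \<le> card ((nb r \<inter> nb u) \<union> (R - {r}))" using finR finnb by (intro card_mono) auto
      also have "\<dots> \<le> card (nb r \<inter> nb u) + card (R - {r})" by (rule card_Un_le)
      also have "card (R - {r}) = card R - 1" using r finR by auto
      finally show ?thesis using degn[OF rV] by linarith
    qed
    have R2: "2 \<le> card R" using cR False m5 by linarith
    have Tne: "\<exists>s. s \<in> nb r \<inter> nb u" if "r \<in> R" for r
    proof -
      have "card R \<noteq> 0" using that finR by auto
      hence "1 \<le> card (nb r \<inter> nb u)" using Tc[OF that] cR D3 mn m5 by linarith
      hence "nb r \<inter> nb u \<noteq> {}" by (intro notI) simp
      thus ?thesis by blast
    qed
    have fin1: "?thesis" if "s1 \<in> nb u" "s2 \<in> nb u" "s1 \<noteq> s2" "a \<in> R" "b \<in> R" "a \<noteq> b" "adj s1 a" "adj s2 b" for s1 s2 a b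
    proof -
      have "card (nb u) - card {s1, s2} \<le> card (nb u - {s1, s2})" by (rule diff_card_le_card_Diff) auto
      hence "n - 5 \<le> card (nb u - {s1, s2})" using D3 Du card2[of s1 s2] by linarith
      then obtain L where L: "L \<subseteq> nb u - {s1, s2}" "card L = n - 5" "finite L" by (rule obtain_subset_with_card_n)
      show ?thesis
      proof (rule embed_T1[OF sym V _ _ _ _ _ _ L(1)[THEN subset_trans] L(2) L(3)])
        show "adj u s1" "adj u s2" "adj s1 a" "adj s2 b" using that by (auto simp: nb_def)
        show "distinct [u, s1, s2, a, b]" using that irr' R_def by auto
      qed (use n8 L irr' that R_def in \<open>auto simp: nb_def\<close>)
    qed
    have "card {} < card R" using R2 by auto
    then obtain r1 where r1: "r1 \<in> R" using pick[of "{}" R] by auto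
    obtain s where s: "s \<in> nb r1 \<inter> nb u" using Tne[OF r1] by blast
    have adjsym: "x \<in> nb y \<Longrightarrow> adj x y" for x y using sym by (auto simp: nb_def)
    show ?thesis
    proof (cases "\<exists>r s'. r \<in> R \<and> r \<noteq> r1 \<and> s' \<in> nb r \<inter> nb u \<and> s' \<noteq> s")
      case True
      then obtain r s' where rs: "r \<in> R" "r \<noteq> r1" "s' \<in> nb r \<inter> nb u" "s' \<noteq> s" by blast
      show ?thesis using fin1[of s s' r1 r] s rs r1 adjsym by auto
    next
      case F1: False
      have "card {r1} < card R" using R2 by auto
      then obtain r2 where r2: "r2 \<in> R" "r2 \<notin> {r1}" using pick[of "{r1}" R] by auto
      obtain s2 where s2: "s2 \<in> nb r2 \<inter> nb u" using Tne[OF r2(1)] by blast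
      have s2s: "s2 = s" using F1 r2 s2 by auto
      show ?thesis
      proof (cases "\<exists>s'. s' \<in> nb r1 \<inter> nb u \<and> s' \<noteq> s")
        case True
        then obtain s' where s': "s' \<in> nb r1 \<inter> nb u" "s' \<noteq> s" by blast
        show ?thesis using fin1[of s' s r1 r2] s' s2 s2s r1 r2 adjsym by auto
      next
        case F2: False
        have Ts: "nb r \<inter> nb u \<subseteq> {s}" if "r \<in> R" for r
          using F1 F2 that by blast
        have "card (nb r1 \<inter> nb u) \<le> card {s}" using Ts[OF r1] by (intro card_mono) auto
        hence "n - 3 \<le> card R" using Tc[OF r1] R2 by simp
        hence Dm: "D \<le> m - 2" using cR by linarith
        have "insert u R \<subseteq> nb s"
        proof
          fix x assume x: "x \<in> insert u R"
          show "x \<in> nb s"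
          proof (cases "x = u")
            case True thus ?thesis using s sym by (auto simp: nb_def)
          next
            case False
            hence xR: "x \<in> R" using x by auto
            obtain t where t: "t \<in> nb x \<inter> nb u" using Tne[OF xR] by blast
            hence "t = s" using Ts[OF xR] by auto
            thus ?thesis using t sym by (auto simp: nb_def)
          qed
        qed
        hence "card (insert u R) \<le> card (nb s)" using finnb by (intro card_mono) auto
        moreover have "card (insert u R) = card R + 1" using card_insert_disjoint[OF finR, of u] by (simp add: R_def)
        moreover have "card (nb s) \<le> D" using umax s nbV by auto
        ultimately show ?thesis using cR Dm mn by linarith
      qed
    qed
  qed
qed



lemma modd: "(u::nat) < N \<Longrightarrow> v < N \<Longrightarrow> (v + N - u) mod N = (if u \<le> v then v - u else v + N - u)"
proof (cases "u \<le> v")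
  case True
  assume "u < N" "v < N"
  hence "v + N - u = (v - u) + N" using True by arith
  hence "(v + N - u) mod N = (v - u + N) mod N" by simp
  also have "\<dots> = v - u" using \<open>v < N\<close> by simp
  finally show ?thesis using True by simp
qed simp

lemma circ_graph:
  fixes N :: nat and S :: "nat set"
  assumes S1: "S \<subseteq> {1..<N}" and Ssym: "\<And>i. i \<in> S \<Longrightarrow> N - i \<in> S"
  defines "E \<equiv> \<lambda>u v. u < N \<and> v < N \<and> (v + N - u) mod N \<in> S"
  shows "simple_graph {0..<N} E \<and> (\<forall>u<N. card {v. v < N \<and> E u v} = card S)"
proof -
  have sym: "E v u" if "E u v" for u v
  proof -
    have u: "u < N" and v: "v < N" and i: "(v + N - u) mod N \<in> S" using that by (auto simp: E_def)
    have "(u + N - v) mod N = N - (v + N - u) mod N"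
      using u v i S1 by (auto simp: modd)
    thus ?thesis using Ssym[OF i] u v by (simp add: E_def)
  qed
  have irr: "\<not> E u u" for u using S1 by (auto simp: E_def)
  have deg: "card {v. v < N \<and> E u v} = card S" if u: "u < N" for u
  proof -
    have "bij_betw (\<lambda>v. (v + N - u) mod N) {v. v < N \<and> E u v} S"
    proof (rule bij_betw_imageI)
      show "inj_on (\<lambda>v. (v + N - u) mod N) {v. v < N \<and> E u v}"
        by (rule inj_onI) (use u in \<open>auto simp: modd split: if_splits\<close>)
      show "(\<lambda>v. (v + N - u) mod N) ` {v. v < N \<and> E u v} = S"
      proof
        show "(\<lambda>v. (v + N - u) mod N) ` {v. v < N \<and> E u v} \<subseteq> S" by (auto simp: E_def)
        show "S \<subseteq> (\<lambda>v. (v + N - u) mod N) ` {v. v < N \<and> E u v}"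
        proof
          fix i assume i: "i \<in> S"
          hence iN: "i < N" using S1 by auto
          define v where "v = (if u + i < N then u + i else u + i - N)"
          have vN: "v < N" using iN u by (auto simp: v_def)
          have "(v + N - u) mod N = i" using vN u iN by (auto simp: modd v_def)
          thus "i \<in> (\<lambda>v. (v + N - u) mod N) ` {v. v < N \<and> E u v}"
            using vN u i by (auto simp: E_def intro!: image_eqI[of _ _ v])
        qed
      qed
    qed
    thus ?thesis by (rule bij_betw_same_card)
  qed
  show ?thesis using sym irr deg by (auto simp: simple_graph_def)
qed

lemma reg_exists:
  fixes N d :: nat
  assumes dN: "d < N" and ev: "even (d * N)"
  shows "\<exists>E. simple_graph {0..<N} E \<and> (\<forall>u<N. card {v. v < N \<and> E u v} = d)"
proof -
  define k where "k = d div 2"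
  define S where "S = {1..k} \<union> {N-k..<N} \<union> (if odd d then {N div 2} else {})"
  have k2: "2 * k < N" using dN by (simp add: k_def)
  have S1: "S \<subseteq> {1..<N}" using k2 dN ev by (auto simp: S_def split: if_splits)
  have Ssym: "N - i \<in> S" if "i \<in> S" for i
    using that k2 ev by (auto simp: S_def split: if_splits)
  have cS: "card S = d"
  proof (cases "odd d")
    case True
    hence Ne: "even N" using ev by simp
    have "k < N div 2" "N div 2 < N - k" using True Ne dN k_def by (auto elim!: evenE oddE)
    hence "card S = card ({1..k} \<union> {N-k..<N}) + 1" using True by (simp add: S_def card_insert_if)
    moreover have "card ({1..k} \<union> {N-k..<N}) = k + k" using k2 by (subst card_Un_disjoint) auto
    moreover have "d = 2 * k + 1" using True k_def by presburger
    ultimately show ?thesis by linarith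
  next
    case False
    have "card ({1..k} \<union> {N-k..<N}) = k + k" using k2 by (subst card_Un_disjoint) auto
    moreover have "d = 2 * k" using False k_def by presburger
    ultimately show ?thesis using False by (simp add: S_def)
  qed
  show ?thesis using circ_graph[OF S1 Ssym] cS by blast
qed



lemma contains_mono:
  assumes "contains V H VH EH" "\<And>a b. H a b \<Longrightarrow> H' a b"
  shows "contains V H' VH EH"
proof -
  obtain f where f: "inj_on f VH" "f ` VH \<subseteq> V" "\<forall>u\<in>VH. \<forall>v\<in>VH. EH u v \<longrightarrow> H (f u) (f v)"
    using assms(1) unfolding contains_def by blast
  hence "\<forall>u\<in>VH. \<forall>v\<in>VH. EH u v \<longrightarrow> H' (f u) (f v)" using assms(2) by blast
  thus ?thesis using f unfolding contains_def by blast
qed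

lemma star_embed:
  fixes E :: "nat \<Rightarrow> nat \<Rightarrow> bool"
  assumes sg: "simple_graph V E" and u: "u \<in> V" and m: "m \<ge> 2"
    and c: "m - 1 \<le> card {v \<in> V. E u v}"
  shows "contains V E {0..<m} (star_edges m)"
proof -
  have finV: "finite V" using sg by (simp add: simple_graph_def)
  obtain S where S: "S \<subseteq> {v \<in> V. E u v}" "card S = m - 1" "finite S"
    using obtain_subset_with_card_n[OF c] by blast
  obtain g where g: "bij_betw g {1..m-1} S" using ex_bij_betw_nat_finite_1[OF S(3)] S(2) by auto
  define f where "f i = (if i = 0 then u else g i)" for i
  have gS: "i \<in> {1..m-1} \<Longrightarrow> g i \<in> S" for i using g by (auto simp: bij_betw_def)
  have ginj: "inj_on g {1..m-1}" using g by (auto simp: bij_betw_def)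
  have uS: "u \<notin> S" using S(1) sg u by (auto simp: simple_graph_def)
  have inj: "inj_on f {0..<m}"
  proof (rule inj_onI)
    fix i k assume i: "i \<in> {0..<m}" and k: "k \<in> {0..<m}" and fe: "f i = f k"
    show "i = k"
    proof (cases "i = 0")
      case True
      show ?thesis
      proof (rule ccontr)
        assume "i \<noteq> k"
        hence "k \<in> {1..m-1}" using True k by auto
        thus False using fe True gS uS by (auto simp: f_def)
      qed
    next
      case False
      hence iS: "i \<in> {1..m-1}" using i by auto
      show ?thesis
      proof (cases "k = 0")
        case True thus ?thesis using fe iS gS uS by (auto simp: f_def)
      next
        case False
        hence "k \<in> {1..m-1}" using k by auto
        thus ?thesis using iS fe ginj \<open>i \<noteq> 0\<close> False by (auto simp: f_def inj_on_def)
      qed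
    qed
  qed
  have img: "f ` {0..<m} \<subseteq> V"
  proof
    fix x assume "x \<in> f ` {0..<m}"
    then obtain i where i: "i < m" "x = f i" by auto
    show "x \<in> V"
    proof (cases "i = 0")
      case True thus ?thesis using i u by (simp add: f_def)
    next
      case False
      hence "g i \<in> S" using gS i by auto
      thus ?thesis using S(1) i False by (auto simp: f_def)
    qed
  qed
  have ed: "E (f a) (f b)" if "star_edges m a b" "a < m" "b < m" for a b
  proof -
    have "(a = 0 \<and> 1 \<le> b \<and> b \<le> m - 1) \<or> (b = 0 \<and> 1 \<le> a \<and> a \<le> m - 1)"
      using that by (auto simp: star_edges_def edges_of_def)
    moreover have "E u (g i)" "E (g i) u" if "1 \<le> i" "i \<le> m - 1" for i
      using gS[of i] that S(1) sg u by (auto simp: simple_graph_def)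
    ultimately show ?thesis by (auto simp: f_def)
  qed
  show ?thesis unfolding contains_def using inj img ed by (intro exI[of _ f]) auto
qed

lemma upper:
  fixes m n j :: nat and E :: "nat \<Rightarrow> nat \<Rightarrow> bool"
  assumes m5: "m \<ge> 5" and n8: "n \<ge> 8" and mn: "n > m" and j: "j \<in> {1, 2}"
    and sg: "simple_graph {0..<m + n - 4} E"
  shows "contains {0..<m + n - 4} E {0..<m} (star_edges m) \<or>
         contains {0..<m + n - 4} (compl_graph E) {0..<n} (T_edges j n)"
proof (cases "contains {0..<m + n - 4} E {0..<m} (star_edges m)")
  case True thus ?thesis by blast
next
  case False
  hence ns: "\<not> contains {0..<m + n - 4} E {0..<m} (star_edges m)" .
  define N where "N = m + n - 4"
  define adj where "adj a b = (a < N \<and> b < N \<and> a \<noteq> b \<and> \<not> E a b)" for a b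
  have esym: "E a b \<Longrightarrow> a < N \<Longrightarrow> b < N \<Longrightarrow> E b a" for a b using sg by (auto simp: simple_graph_def N_def)
  have sym: "adj a b \<Longrightarrow> adj b a" for a b using esym by (auto simp: adj_def)
  have V: "adj a b \<Longrightarrow> a \<in> {0..<N}" for a b by (auto simp: adj_def)
  have irr: "\<not> adj a a" for a by (auto simp: adj_def)
  have deg: "n - 3 \<le> card {v. adj u v}" if u: "u \<in> {0..<N}" for u
  proof -
    have dl: "card {v \<in> {0..<N}. E u v} \<le> m - 2"
    proof (rule ccontr)
      assume "\<not> card {v \<in> {0..<N}. E u v} \<le> m - 2"
      hence "m - 1 \<le> card {v \<in> {0..<N}. E u v}" by linarith
      from star_embed[OF sg[folded N_def] u _ this] m5 ns show False by (auto simp: N_def)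
    qed
    have e: "{v. adj u v} = {0..<N} - insert u {v \<in> {0..<N}. E u v}" using u by (auto simp: adj_def)
    have sub: "insert u {v \<in> {0..<N}. E u v} \<subseteq> {0..<N}" using u by auto
    have c1: "card {v. adj u v} = N - card (insert u {v \<in> {0..<N}. E u v})"
      unfolding e using sub by (simp add: card_Diff_subset)
    have c2: "card (insert u {v \<in> {0..<N}. E u v}) \<le> Suc (card {v \<in> {0..<N}. E u v})"
      by (simp add: card_insert_le_m1)
    show ?thesis using c1 c2 dl N_def m5 by linarith
  qed
  have cV: "card {0..<N} = m + n - 4" by (simp add: N_def)
  have "contains {0..<N} adj {0..<n} (T_edges j n)"
  proof (cases "j = 1")
    case True
    thus ?thesis using T1_cfg[OF sym V irr _ cV m5 mn n8 deg] by (simp add: T_edges_def)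
  next
    case False
    thus ?thesis using T2_cfg[OF sym V irr _ cV m5 mn n8 deg] j by (simp add: T_edges_def)
  qed
  hence "contains {0..<N} (compl_graph E) {0..<n} (T_edges j n)"
    by (rule contains_mono) (auto simp: adj_def compl_graph_def)
  hence "contains {0..<m + n - 4} (compl_graph E) {0..<n} (T_edges j n)" by (simp add: N_def)
  thus ?thesis by blast
qed

lemma Tedge0: "1 \<le> i \<Longrightarrow> i \<le> n - 3 \<Longrightarrow> T_edges j n 0 i"
  by (auto simp: T_edges_def T1_edges_def T2_edges_def edges_of_def)

lemma bad:
  fixes E :: "nat \<Rightarrow> nat \<Rightarrow> bool"
  assumes sg: "simple_graph {0..<N0} E" and dg: "\<forall>u<N0. card {v. v < N0 \<and> E u v} = d"
    and dm: "d < m - 1" and dn: "N0 - 1 - d < n - 3" and m2: "2 \<le> m" and n4: "4 \<le> n"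
    and NN: "N \<le> N0" and dN: "d < N0"
  shows "simple_graph {0..<N} E \<and> \<not> contains {0..<N} E {0..<m} (star_edges m) \<and>
         \<not> contains {0..<N} (compl_graph E) {0..<n} (T_edges j n)"
proof (intro conjI)
  show "simple_graph {0..<N} E" using sg NN by (auto simp: simple_graph_def)
  show "\<not> contains {0..<N} E {0..<m} (star_edges m)"
  proof
    assume "contains {0..<N} E {0..<m} (star_edges m)"
    then obtain f where f: "inj_on f {0..<m}" "f ` {0..<m} \<subseteq> {0..<N}"
      "\<forall>u\<in>{0..<m}. \<forall>v\<in>{0..<m}. star_edges m u v \<longrightarrow> E (f u) (f v)" unfolding contains_def by blast
    have "f 0 \<in> {0..<N}" using f(2) m2 by (auto simp: image_subset_iff)
    hence f0: "f 0 < N0" using NN by auto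
    have sub: "f ` {1..m-1} \<subseteq> {v. v < N0 \<and> E (f 0) v}"
    proof
      fix x assume "x \<in> f ` {1..m-1}"
      then obtain i where i: "1 \<le> i" "i \<le> m - 1" "x = f i" by auto
      have "star_edges m 0 i" using i by (auto simp: star_edges_def edges_of_def)
      hence "E (f 0) (f i)" using f(3) i m2 by auto
      moreover have "f i < N0"
      proof -
        have "f i \<in> {0..<N}" using f(2) i by (auto simp: image_subset_iff)
        thus ?thesis using NN by auto
      qed
      ultimately show "x \<in> {v. v < N0 \<and> E (f 0) v}" using i by auto
    qed
    have "inj_on f {1..m-1}" using f(1) by (rule inj_on_subset) auto
    hence "card (f ` {1..m-1}) = m - 1" by (simp add: card_image)
    moreover have "card (f ` {1..m-1}) \<le> card {v. v < N0 \<and> E (f 0) v}"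
      using sub by (intro card_mono) auto
    ultimately show False using dg f0 dm by auto
  qed
  show "\<not> contains {0..<N} (compl_graph E) {0..<n} (T_edges j n)"
  proof
    assume "contains {0..<N} (compl_graph E) {0..<n} (T_edges j n)"
    then obtain f where f: "inj_on f {0..<n}" "f ` {0..<n} \<subseteq> {0..<N}"
      "\<forall>u\<in>{0..<n}. \<forall>v\<in>{0..<n}. T_edges j n u v \<longrightarrow> compl_graph E (f u) (f v)" unfolding contains_def by blast
    have "f 0 \<in> {0..<N}" using f(2) n4 by (auto simp: image_subset_iff)
    hence f0: "f 0 < N0" using NN by auto
    define B where "B = insert (f 0) {v. v < N0 \<and> E (f 0) v}"
    have sub: "f ` {1..n-3} \<subseteq> {0..<N0} - B"
    proof
      fix x assume "x \<in> f ` {1..n-3}"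
      then obtain i where i: "1 \<le> i" "i \<le> n - 3" "x = f i" by auto
      have "compl_graph E (f 0) (f i)" using f(3) i n4 Tedge0[of i n j] by auto
      moreover have "f i < N0"
      proof -
        have "f i \<in> {0..<N}" using f(2) i by (auto simp: image_subset_iff)
        thus ?thesis using NN by auto
      qed
      ultimately show "x \<in> {0..<N0} - B" using i by (auto simp: B_def compl_graph_def)
    qed
    have irr: "\<not> E (f 0) (f 0)" using sg f0 by (auto simp: simple_graph_def)
    have cB: "card B = d + 1" using dg f0 irr by (simp add: B_def)
    have Bs: "B \<subseteq> {0..<N0}" using f0 by (auto simp: B_def)
    have "inj_on f {1..n-3}" using f(1) by (rule inj_on_subset) auto
    hence "card (f ` {1..n-3}) = n - 3" by (simp add: card_image)
    moreover have "card (f ` {1..n-3}) \<le> card ({0..<N0} - B)"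
      using sub by (intro card_mono) auto
    moreover have "card ({0..<N0} - B) = N0 - (d + 1)" using Bs cB
      by (simp add: card_Diff_subset finite_subset)
    ultimately show False using dn by linarith
  qed
qed

theorem theorem6p1:
  fixes m n j :: nat
  assumes "m \<ge> 5" and "n \<ge> 8" and "n > m" and "j \<in> {1, 2}"
  shows "ramsey_number {0..<m} (star_edges m) {0..<n} (T_edges j n) \<in> {m + n - 4, m + n - 5}
     \<and> (even (m * n) \<longrightarrow> ramsey_number {0..<m} (star_edges m) {0..<n} (T_edges j n) = m + n - 4)"
proof -
  define P where "P N = (0 < N \<and> (\<forall>E :: nat \<Rightarrow> nat \<Rightarrow> bool. simple_graph {0..<N} E \<longrightarrow>
         contains {0..<N} E {0..<m} (star_edges m) \<or> contains {0..<N} (compl_graph E) {0..<n} (T_edges j n)))" for N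
  have rn: "ramsey_number {0..<m} (star_edges m) {0..<n} (T_edges j n) = Least P"
    unfolding ramsey_number_def P_def by (rule refl)
  have Pu: "P (m + n - 4)" unfolding P_def using upper[OF assms] assms by auto
  define N0 where "N0 = (if even (m * n) then m + n - 5 else m + n - 6)"
  have dN: "m - 2 < N0" using assms by (auto simp: N0_def)
  have ev: "even ((m - 2) * N0)"
  proof (cases "even (m * n)")
    case True
    hence "even m \<or> even n" by simp
    thus ?thesis
    proof
      assume "even m" hence "even (m - 2)" using assms by presburger
      thus ?thesis by simp
    next
      assume en: "even n"
      show ?thesis
      proof (cases "even m")
        case True hence "even (m - 2)" using assms by presburger
        thus ?thesis by simp
      next
        case False hence "even (m + n - 5)" using en assms by presburger
        thus ?thesis using \<open>even (m * n)\<close> by (simp add: N0_def)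
      qed
    qed
  next
    case False
    hence "odd m" "odd n" by auto
    hence "even (m + n - 6)" using assms by presburger
    thus ?thesis using False by (simp add: N0_def)
  qed
  obtain E where E: "simple_graph {0..<N0} E" "\<forall>u<N0. card {v. v < N0 \<and> E u v} = m - 2"
    using reg_exists[OF dN ev] by blast
  have notP: "\<not> P N" if "N \<le> N0" for N
  proof (cases "N = 0")
    case True thus ?thesis by (simp add: P_def)
  next
    case False
    have dn: "N0 - 1 - (m - 2) < n - 3" using assms by (auto simp: N0_def)
    have "m - 2 < m - 1" "2 \<le> m" "4 \<le> n" using assms by auto
    from bad[OF E(1) E(2) this(1) dn this(2) this(3) that dN, of j]
    show ?thesis unfolding P_def by blast
  qed
  have le: "Least P \<le> m + n - 4" by (rule Least_le[of P, OF Pu])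
  have "P (Least P)" by (rule LeastI[of P, OF Pu])
  hence gt: "N0 < Least P" using notP by (meson not_le)
  show ?thesis unfolding rn using le gt assms by (auto simp: N0_def split: if_splits)
qed


end
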